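(* Let $S$ be a partial semigroup and let $\mathcal{S}_0,\mathcal{S}_1$ be function arrays over $S$ indexed by finite sets $\Lambda_0,\Lambda_1$ respectively. Then there is a homomorphism of function arrays $\gamma\mathcal{S}_0\otimes\gamma\mathcal{S}_1\to\gamma(\mathcal{S}_0\otimes\mathcal{S}_1)$.
   Context: Partial semigroup: partial operation with $(rs)t$ defined iff $r(st)$ defined, and then equal. A function array over $S$ indexed by non-empty $\Lambda$ and based on a set $X$ assigns to each $\lambda\in\Lambda$ a partial function $\lambda$ from $X$ to $S$ such that for all $s_0,\dots,s_k\in S$ there is $x\in X$ with all $s_i\lambda(x)$ defined. Total: $S$ a semigroup and all $\lambda$ defined everywhere. For $\mathcal{S}$ based on $X$: $\gamma S$ = ultrafilters $\mathcal{U}$ on $S$ with $\{t: st\text{ defined}\}\in\mathcal{U}$ for all $s$, with $B\in\mathcal{U}*\mathcal{V}$ iff $\{s:\{t: st\text{ defined},\ st\in B\}\in\mathcal{V}\}\in\mathcal{U}$ (a semigroup); $\gamma X$ = ultrafilters $\mathcal{U}$ on $X$ with $\{x: s\lambda(x)\text{ defined}\}\in\mathcal{U}$ for all $s,\lambda$; $\lambda$ extends to $\gamma X\to\gamma S$ by $B\in\lambda(\mathcal{U})$ iff $\lambda^{-1}(B)\in\mathcal{U}$; $\gamma\mathcal{S}$ is the total function array over $\gamma S$ indexed by $\Lambda$ based on $\gamma X$. Tensor product: for finite $\Lambda_0,\Lambda_1$ let $\Lambda_0\star\Lambda_1=\Lambda_0\sqcup\Lambda_1\sqcup(\Lambda_0\times\Lambda_1)$;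 for function arrays $\mathcal{S}_i$ over the same partial semigroup $S$ indexed by $\Lambda_i$ and based on $X_i$, $\mathcal{S}_0\otimes\mathcal{S}_1$ is the function array over $S$ indexed by $\Lambda_0\star\Lambda_1$ and based on $X_0\times X_1$ given by $\lambda_0(x_0,x_1)=\lambda_0(x_0)$, $\lambda_1(x_0,x_1)=\lambda_1(x_1)$, $(\lambda_0,\lambda_1)(x_0,x_1)=\lambda_0(x_0)\lambda_1(x_1)$ (defined when this product is). A homomorphism between total function arrays $\mathcal{A}$ (over $A$, based on $X$) and $\mathcal{B}$ (over $B$, based on $Y$) indexed by the same set is a pair $(f,g)$, $f\colon X\to Y$, $g\colon A\to B$ a semigroup homomorphism, with $\lambda(f(x))=g(\lambda(x))$ for all $x,\lambda$. *)

theory Defs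
  imports Main
begin

definition partial_semigroup :: "'a set \<Rightarrow> ('a \<Rightarrow> 'a \<Rightarrow> 'a option) \<Rightarrow> bool" where
  "partial_semigroup S p \<longleftrightarrow>
     (\<forall>s\<in>S. \<forall>t\<in>S. \<forall>u. p s t = Some u \<longrightarrow> u \<in> S) \<and>
     (\<forall>r\<in>S. \<forall>s\<in>S. \<forall>t\<in>S.
        Option.bind (p r s) (\<lambda>u. p u t) = Option.bind (p s t) (\<lambda>v. p r v))"

definition app_defined :: "('a \<Rightarrow> 'a \<Rightarrow> 'a option) \<Rightarrow> 'a \<Rightarrow> 'a option \<Rightarrow> bool" where
  "app_defined p s y \<longleftrightarrow> (\<exists>u. y = Some u \<and> p s u \<noteq> None)"

definition function_array ::
  "'a set \<Rightarrow> ('a \<Rightarrow> 'a \<Rightarrow> 'a option) \<Rightarrow> 'i set \<Rightarrow> ('i \<Rightarrow> 'x \<Rightarrow> 'a option) \<Rightarrow> 'x set \<Rightarrow> bool" where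
  "function_array S p Lam lam X \<longleftrightarrow>
     Lam \<noteq> {} \<and>
     (\<forall>i\<in>Lam. \<forall>x\<in>X. \<forall>u. lam i x = Some u \<longrightarrow> u \<in> S) \<and>
     (\<forall>F. finite F \<and> F \<noteq> {} \<and> F \<subseteq> S \<longrightarrow>
        (\<exists>x\<in>X. \<forall>s\<in>F. \<forall>i\<in>Lam. app_defined p s (lam i x)))"

definition ultrafilter_on :: "'a set \<Rightarrow> 'a set set \<Rightarrow> bool" where
  "ultrafilter_on A U \<longleftrightarrow>
     U \<subseteq> Pow A \<and> A \<in> U \<and> {} \<notin> U \<and>
     (\<forall>B\<in>U. \<forall>C\<in>U. B \<inter> C \<in> U) \<and>
     (\<forall>B\<in>U. \<forall>C. B \<subseteq> C \<and> C \<subseteq> A \<longrightarrow> C \<in> U) \<and>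
     (\<forall>B. B \<subseteq> A \<longrightarrow> B \<in> U \<or> A - B \<in> U)"

definition gammaS :: "'a set \<Rightarrow> ('a \<Rightarrow> 'a \<Rightarrow> 'a option) \<Rightarrow> 'a set set set" where
  "gammaS S p = {U. ultrafilter_on S U \<and> (\<forall>s\<in>S. {t\<in>S. p s t \<noteq> None} \<in> U)}"

definition gamma_mult :: "'a set \<Rightarrow> ('a \<Rightarrow> 'a \<Rightarrow> 'a option) \<Rightarrow> 'a set set \<Rightarrow> 'a set set \<Rightarrow> 'a set set" where
  "gamma_mult S p U V =
     {B. B \<subseteq> S \<and> {s\<in>S. {t\<in>S. \<exists>u. p s t = Some u \<and> u \<in> B} \<in> V} \<in> U}"

text \<open>The (total) operation of gamma S, written as a partial operation that is always defined.\<close>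

definition gamma_op :: "'a set \<Rightarrow> ('a \<Rightarrow> 'a \<Rightarrow> 'a option) \<Rightarrow> 'a set set \<Rightarrow> 'a set set \<Rightarrow> 'a set set option" where
  "gamma_op S p U V = Some (gamma_mult S p U V)"

definition gammaX ::
  "'a set \<Rightarrow> ('a \<Rightarrow> 'a \<Rightarrow> 'a option) \<Rightarrow> 'i set \<Rightarrow> ('i \<Rightarrow> 'x \<Rightarrow> 'a option) \<Rightarrow> 'x set \<Rightarrow> 'x set set set" where
  "gammaX S p Lam lam X =
     {U. ultrafilter_on X U \<and>
         (\<forall>s\<in>S. \<forall>i\<in>Lam. {x\<in>X. app_defined p s (lam i x)} \<in> U)}"

definition gamma_lam ::
  "'a set \<Rightarrow> ('i \<Rightarrow> 'x \<Rightarrow> 'a option) \<Rightarrow> 'x set \<Rightarrow> 'i \<Rightarrow> 'x set set \<Rightarrow> 'a set set option" where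
  "gamma_lam S lam X i U = Some {B. B \<subseteq> S \<and> {x\<in>X. \<exists>u. lam i x = Some u \<and> u \<in> B} \<in> U}"

datatype ('i, 'j) star_idx = SL 'i | SR 'j | SP 'i 'j

definition star_set :: "'i set \<Rightarrow> 'j set \<Rightarrow> ('i, 'j) star_idx set" where
  "star_set L0 L1 = SL ` L0 \<union> SR ` L1 \<union> (\<lambda>(i, j). SP i j) ` (L0 \<times> L1)"

fun tensor ::
  "('a \<Rightarrow> 'a \<Rightarrow> 'a option) \<Rightarrow> ('i \<Rightarrow> 'x \<Rightarrow> 'a option) \<Rightarrow> ('j \<Rightarrow> 'y \<Rightarrow> 'a option)
   \<Rightarrow> ('i, 'j) star_idx \<Rightarrow> 'x \<times> 'y \<Rightarrow> 'a option" where
  "tensor p lam0 lam1 (SL i) (x, y) = lam0 i x"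
| "tensor p lam0 lam1 (SR j) (x, y) = lam1 j y"
| "tensor p lam0 lam1 (SP i j) (x, y) =
     Option.bind (lam0 i x) (\<lambda>a. Option.bind (lam1 j y) (\<lambda>b. p a b))"

text \<open>Operations/maps are given in option form; for total arrays they are always Some,
  and the conditions below say g(ab) = g(a)g(b) and lamB(f x) = g(lamA x).\<close>

definition fa_hom ::
  "'a set \<Rightarrow> ('a \<Rightarrow> 'a \<Rightarrow> 'a option) \<Rightarrow> 'i set \<Rightarrow> ('i \<Rightarrow> 'x \<Rightarrow> 'a option) \<Rightarrow> 'x set
   \<Rightarrow> 'b set \<Rightarrow> ('b \<Rightarrow> 'b \<Rightarrow> 'b option) \<Rightarrow> ('i \<Rightarrow> 'y \<Rightarrow> 'b option) \<Rightarrow> 'y set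
   \<Rightarrow> ('x \<Rightarrow> 'y) \<Rightarrow> ('a \<Rightarrow> 'b) \<Rightarrow> bool" where
  "fa_hom A mA Lam lamA X B mB lamB Y f g \<longleftrightarrow>
     (\<forall>x\<in>X. f x \<in> Y) \<and>
     (\<forall>a\<in>A. g a \<in> B) \<and>
     (\<forall>a\<in>A. \<forall>b\<in>A. mB (g a) (g b) = map_option g (mA a b)) \<and>
     (\<forall>i\<in>Lam. \<forall>x\<in>X. lamB i (f x) = map_option g (lamA i x))"

end

theory Submission
  imports Defs
begin

definition prodU :: "'x set \<Rightarrow> 'y set \<Rightarrow> 'x set set \<Rightarrow> 'y set set \<Rightarrow> ('x \<times> 'y) set set" where
  "prodU X0 X1 U V = {C. C \<subseteq> X0 \<times> X1 \<and> {x\<in>X0. {y\<in>X1. (x,y)\<in>C}\<in>V}\<in>U}"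

lemma uf_D:
  assumes "ultrafilter_on A U"
  shows uf_pow0: "U \<subseteq> Pow A" and uf_top: "A\<in>U" and uf_empty: "{}\<notin>U"
    and uf_inter0: "\<forall>B\<in>U. \<forall>C\<in>U. B\<inter>C\<in>U"
    and uf_mono0: "\<forall>B\<in>U. \<forall>C. B\<subseteq>C \<and> C\<subseteq>A \<longrightarrow> C\<in>U"
    and uf_ultra0: "\<forall>B. B\<subseteq>A \<longrightarrow> B\<in>U \<or> A-B\<in>U"
  using assms unfolding ultrafilter_on_def by simp_all

lemma uf_I:
  assumes "U \<subseteq> Pow A" "A\<in>U" "{}\<notin>U" "\<And>B C. B\<in>U \<Longrightarrow> C\<in>U \<Longrightarrow> B\<inter>C\<in>U"
    "\<And>B C. B\<in>U \<Longrightarrow> B\<subseteq>C \<Longrightarrow> C\<subseteq>A \<Longrightarrow> C\<in>U"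
    "\<And>B. B\<subseteq>A \<Longrightarrow> B\<in>U \<or> A-B\<in>U"
  shows "ultrafilter_on A U"
  unfolding ultrafilter_on_def using assms by simp

lemma uf_mono: assumes U: "ultrafilter_on A U" and "B\<in>U" "B\<subseteq>C" "C\<subseteq>A" shows "C\<in>U"
  using uf_mono0[OF U, rule_format, of B C] assms by simp

lemma uf_inter: assumes U: "ultrafilter_on A U" and "B\<in>U" "C\<in>U" shows "B\<inter>C\<in>U"
  using uf_inter0[OF U, rule_format, of B C] assms by simp

lemma uf_ultra: assumes U: "ultrafilter_on A U" and "B\<subseteq>A" shows "B\<in>U \<or> A-B\<in>U"
  using uf_ultra0[OF U, rule_format, of B] assms by simp

lemma uf_sub: assumes U: "ultrafilter_on A U" and "B\<in>U" shows "B\<subseteq>A"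
  using uf_pow0[OF U] assms by auto

lemma uf_compl:
  assumes U: "ultrafilter_on A U" and B: "B \<subseteq> A"
  shows "(A-B\<in>U) \<longleftrightarrow> B\<notin>U"
proof
  assume h: "A-B\<in>U"
  show "B\<notin>U"
  proof
    assume b: "B\<in>U"
    have "B\<inter>(A-B)\<in>U" by (rule uf_inter[OF U b h])
    moreover have "B\<inter>(A-B)={}" by blast
    ultimately show False using uf_empty[OF U] by simp
  qed
next
  assume "B\<notin>U"
  thus "A-B\<in>U" using uf_ultra[OF U B] by simp
qed

lemma uf_int:
  assumes U: "ultrafilter_on A U" and "B \<subseteq> A" "C \<subseteq> A"
  shows "(B\<inter>C\<in>U \<longleftrightarrow> B\<in>U \<and> C\<in>U)"
proof
  assume h: "B\<inter>C\<in>U"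
  have "B \<in> U" by (rule uf_mono[OF U h]) (use assms in auto)
  moreover have "C \<in> U" by (rule uf_mono[OF U h]) (use assms in auto)
  ultimately show "B\<in>U \<and> C\<in>U" by simp
next
  assume "B\<in>U \<and> C\<in>U"
  thus "B\<inter>C\<in>U" using uf_inter[OF U] by simp
qed

lemma uf_const: assumes U: "ultrafilter_on A U" shows "({y\<in>A. Q} \<in> U \<longleftrightarrow> Q)"
  using uf_top[OF U] uf_empty[OF U] by (cases Q) simp_all

lemma prodU_mem: "{z\<in>X0\<times>X1. P z} \<in> prodU X0 X1 U V \<longleftrightarrow> {x\<in>X0. {y\<in>X1. P (x,y)}\<in>V}\<in>U"
proof -
  have "{x\<in>X0. {y\<in>X1. (x,y)\<in>{z\<in>X0\<times>X1. P z}}\<in>V} = {x\<in>X0. {y\<in>X1. P (x,y)}\<in>V}"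
  proof (rule Collect_cong)
    fix x
    have "x\<in>X0 \<Longrightarrow> {y\<in>X1. (x,y)\<in>{z\<in>X0\<times>X1. P z}} = {y\<in>X1. P (x,y)}" by auto
    then show "(x\<in>X0 \<and> {y\<in>X1. (x,y)\<in>{z\<in>X0\<times>X1. P z}}\<in>V) = (x\<in>X0 \<and> {y\<in>X1. P (x,y)}\<in>V)"
      by auto
  qed
  then show ?thesis unfolding prodU_def by auto
qed

lemma prodU_uf:
  fixes X0 :: "'x set" and X1 :: "'y set"
  assumes U: "ultrafilter_on X0 U" and V: "ultrafilter_on X1 V"
  shows "ultrafilter_on (X0\<times>X1) (prodU X0 X1 U V)"
proof -
  define sec :: "('x \<times> 'y) set \<Rightarrow> 'x \<Rightarrow> 'y set" where "sec C x = {y\<in>X1. (x,y)\<in>C}" for C x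
  have pm: "C \<in> prodU X0 X1 U V \<longleftrightarrow> C \<subseteq> X0\<times>X1 \<and> {x\<in>X0. sec C x \<in> V} \<in> U" for C
    unfolding prodU_def sec_def by simp
  have a1: "prodU X0 X1 U V \<subseteq> Pow (X0\<times>X1)" unfolding prodU_def by auto
  have "{x\<in>X0. sec (X0\<times>X1) x \<in> V} = X0"
    using uf_top[OF V] unfolding sec_def by auto
  hence a2: "X0\<times>X1 \<in> prodU X0 X1 U V" using uf_top[OF U] pm by auto
  have "{x\<in>X0. sec {} x \<in> V} = {}"
    using uf_empty[OF V] unfolding sec_def by auto
  hence a3: "{} \<notin> prodU X0 X1 U V" using uf_empty[OF U] pm[of "{}"] by (simp only:) simp
  have a4: "B \<inter> C \<in> prodU X0 X1 U V" if "B \<in> prodU X0 X1 U V" "C \<in> prodU X0 X1 U V" for B C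
  proof -
    have "{x\<in>X0. sec (B\<inter>C) x \<in> V} = {x\<in>X0. sec B x \<in> V} \<inter> {x\<in>X0. sec C x \<in> V}"
    proof -
      have "sec (B\<inter>C) x = sec B x \<inter> sec C x" for x unfolding sec_def by auto
      moreover have "sec B x \<inter> sec C x \<in> V \<longleftrightarrow> sec B x \<in> V \<and> sec C x \<in> V" for x
        using uf_int[OF V, of "sec B x" "sec C x"] unfolding sec_def by auto
      ultimately show ?thesis by auto
    qed
    moreover have "{x\<in>X0. sec B x \<in> V} \<inter> {x\<in>X0. sec C x \<in> V} \<in> U"
      using that pm uf_inter[OF U] by simp
    ultimately show ?thesis using that pm by auto
  qed
  have a5: "C \<in> prodU X0 X1 U V" if "B \<in> prodU X0 X1 U V" "B \<subseteq> C" "C \<subseteq> X0\<times>X1" for B C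
  proof -
    have "{x\<in>X0. sec B x \<in> V} \<subseteq> {x\<in>X0. sec C x \<in> V}"
    proof
      fix x assume "x \<in> {x\<in>X0. sec B x \<in> V}"
      moreover have "sec B x \<subseteq> sec C x" "sec C x \<subseteq> X1" using that unfolding sec_def by auto
      ultimately show "x \<in> {x\<in>X0. sec C x \<in> V}" using uf_mono[OF V] by blast
    qed
    then show ?thesis using that pm uf_mono[OF U, of "{x\<in>X0. sec B x \<in> V}"] by auto
  qed
  have a6: "B \<in> prodU X0 X1 U V \<or> X0\<times>X1 - B \<in> prodU X0 X1 U V" if "B \<subseteq> X0\<times>X1" for B
  proof -
    have "sec (X0\<times>X1 - B) x = X1 - sec B x" if "x\<in>X0" for x using that unfolding sec_def by auto
    moreover have "X1 - sec B x \<in> V \<longleftrightarrow> sec B x \<notin> V" for x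
      using uf_compl[OF V, of "sec B x"] unfolding sec_def by auto
    ultimately have "{x\<in>X0. sec (X0\<times>X1 - B) x \<in> V} = X0 - {x\<in>X0. sec B x \<in> V}" by auto
    moreover have "{x\<in>X0. sec B x \<in> V} \<in> U \<or> X0 - {x\<in>X0. sec B x \<in> V} \<in> U"
      using uf_ultra[OF U] by simp
    ultimately show ?thesis using pm that by auto
  qed
  show ?thesis by (rule uf_I[OF a1 a2 a3 a4 a5 a6])
qed

lemma lam_SP:
  assumes U: "ultrafilter_on X0 U" and V: "ultrafilter_on X1 V"
    and f0: "\<forall>x\<in>X0. \<forall>u. lam0 i x = Some u \<longrightarrow> u\<in>S"
    and f1: "\<forall>y\<in>X1. \<forall>u. lam1 j y = Some u \<longrightarrow> u\<in>S"
  shows "gamma_lam S (tensor p lam0 lam1) (X0\<times>X1) (SP i j) (prodU X0 X1 U V)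
       = gamma_op S p (the (gamma_lam S lam0 X0 i U)) (the (gamma_lam S lam1 X1 j V))"
proof -
  let ?L0 = "{B. B\<subseteq>S \<and> {x\<in>X0. \<exists>u. lam0 i x = Some u \<and> u\<in>B}\<in>U}"
  let ?L1 = "{B. B\<subseteq>S \<and> {y\<in>X1. \<exists>u. lam1 j y = Some u \<and> u\<in>B}\<in>V}"
  have e: "(B \<subseteq> S \<and> {z\<in>X0\<times>X1. \<exists>u. tensor p lam0 lam1 (SP i j) z = Some u \<and> u\<in>B} \<in> prodU X0 X1 U V)
     = (B \<subseteq> S \<and> {s\<in>S. {t\<in>S. \<exists>u. p s t = Some u \<and> u \<in> B} \<in> ?L1} \<in> ?L0)" for B
  proof -
    define W where "W a = {y\<in>X1. \<exists>w. lam1 j y = Some w \<and> w\<in>{t\<in>S. \<exists>u. p a t = Some u \<and> u \<in> B}}" for a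
    have r: "{s\<in>S. {t\<in>S. \<exists>u. p s t = Some u \<and> u \<in> B} \<in> ?L1} \<in> ?L0
       \<longleftrightarrow> {x\<in>X0. \<exists>a. lam0 i x = Some a \<and> a\<in>S \<and> W a \<in> V} \<in> U"
    proof -
      have "{x\<in>X0. \<exists>u. lam0 i x = Some u \<and> u\<in>{s\<in>S. {t\<in>S. \<exists>u. p s t = Some u \<and> u \<in> B} \<in> ?L1}}
          = {x\<in>X0. \<exists>a. lam0 i x = Some a \<and> a\<in>S \<and> W a \<in> V}"
        unfolding W_def by auto
      then show ?thesis by auto
    qed
    have l: "{x\<in>X0. {y\<in>X1. \<exists>u. tensor p lam0 lam1 (SP i j) (x,y) = Some u \<and> u\<in>B}\<in>V}
        = {x\<in>X0. \<exists>a. lam0 i x = Some a \<and> a\<in>S \<and> W a \<in> V}"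
    proof (rule Collect_cong)
      fix x
      show "(x\<in>X0 \<and> {y\<in>X1. \<exists>u. tensor p lam0 lam1 (SP i j) (x,y) = Some u \<and> u\<in>B}\<in>V)
          = (x\<in>X0 \<and> (\<exists>a. lam0 i x = Some a \<and> a\<in>S \<and> W a \<in> V))"
      proof (cases "x \<in> X0")
        case True
        show ?thesis
        proof (cases "lam0 i x")
          case None
          then have "{y\<in>X1. \<exists>u. tensor p lam0 lam1 (SP i j) (x,y) = Some u \<and> u\<in>B} = {}" by simp
          then show ?thesis using uf_empty[OF V] None by auto
        next
          case (Some a)
          have aS: "a \<in> S" using f0 True Some by blast
          have "{y\<in>X1. \<exists>u. tensor p lam0 lam1 (SP i j) (x,y) = Some u \<and> u\<in>B} = W a"
            unfolding W_def using Some f1 by (auto split: Option.bind_splits)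
          then show ?thesis using Some aS True by auto
        qed
      qed auto
    qed
    show ?thesis using r l prodU_mem[of X0 X1 "\<lambda>z. \<exists>u. tensor p lam0 lam1 (SP i j) z = Some u \<and> u\<in>B" U V]
      by simp
  qed
  show ?thesis unfolding gamma_lam_def gamma_op_def gamma_mult_def option.sel
    using e by auto
qed

lemma lam_SL:
  assumes U: "ultrafilter_on X0 U" and V: "ultrafilter_on X1 V"
  shows "gamma_lam S (tensor p lam0 lam1) (X0\<times>X1) (SL i) (prodU X0 X1 U V)
       = gamma_lam S lam0 X0 i U"
proof -
  have "(B \<subseteq> S \<and> {z\<in>X0\<times>X1. \<exists>u. tensor p lam0 lam1 (SL i) z = Some u \<and> u\<in>B} \<in> prodU X0 X1 U V)
     = (B \<subseteq> S \<and> {x\<in>X0. \<exists>u. lam0 i x = Some u \<and> u\<in>B} \<in> U)" for B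
    using prodU_mem[of X0 X1 "\<lambda>z. \<exists>u. tensor p lam0 lam1 (SL i) z = Some u \<and> u\<in>B" U V]
    by (simp add: uf_const[OF V])
  then show ?thesis unfolding gamma_lam_def by auto
qed

lemma lam_SR:
  assumes U: "ultrafilter_on X0 U" and V: "ultrafilter_on X1 V"
  shows "gamma_lam S (tensor p lam0 lam1) (X0\<times>X1) (SR j) (prodU X0 X1 U V)
       = gamma_lam S lam1 X1 j V"
proof -
  have "(B \<subseteq> S \<and> {z\<in>X0\<times>X1. \<exists>u. tensor p lam0 lam1 (SR j) z = Some u \<and> u\<in>B} \<in> prodU X0 X1 U V)
     = (B \<subseteq> S \<and> {y\<in>X1. \<exists>u. lam1 j y = Some u \<and> u\<in>B} \<in> V)" for B
    using prodU_mem[of X0 X1 "\<lambda>z. \<exists>u. tensor p lam0 lam1 (SR j) z = Some u \<and> u\<in>B" U V]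
    by (simp add: uf_const[OF U])
  then show ?thesis unfolding gamma_lam_def by auto
qed

lemma def_SP:
  assumes ps: "partial_semigroup S p"
    and U: "ultrafilter_on X0 U" and V: "ultrafilter_on X1 V"
    and f0: "\<forall>x\<in>X0. \<forall>u. lam0 i x = Some u \<longrightarrow> u\<in>S"
    and f1: "\<forall>y\<in>X1. \<forall>u. lam1 j y = Some u \<longrightarrow> u\<in>S"
    and hU: "\<forall>s\<in>S. {x\<in>X0. app_defined p s (lam0 i x)} \<in> U"
    and hV: "\<forall>s\<in>S. {y\<in>X1. app_defined p s (lam1 j y)} \<in> V"
    and sS: "s \<in> S"
  shows "{z\<in>X0\<times>X1. app_defined p s (tensor p lam0 lam1 (SP i j) z)} \<in> prodU X0 X1 U V"
proof -
  let ?T = "{x\<in>X0. {y\<in>X1. app_defined p s (tensor p lam0 lam1 (SP i j) (x,y))}\<in>V}"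
  have "{x\<in>X0. app_defined p s (lam0 i x)} \<subseteq> ?T"
  proof
    fix x assume x: "x \<in> {x\<in>X0. app_defined p s (lam0 i x)}"
    then obtain a c where a: "lam0 i x = Some a" and c: "p s a = Some c"
      unfolding app_defined_def by auto
    have aS: "a \<in> S" using f0 x a by blast
    have cS: "c \<in> S" using ps aS sS c unfolding partial_semigroup_def by blast
    have "{y\<in>X1. app_defined p c (lam1 j y)} \<subseteq> {y\<in>X1. app_defined p s (tensor p lam0 lam1 (SP i j) (x,y))}"
    proof
      fix y assume y: "y \<in> {y\<in>X1. app_defined p c (lam1 j y)}"
      then obtain b d where b: "lam1 j y = Some b" and d: "p c b = Some d"
        unfolding app_defined_def by auto
      have bS: "b \<in> S" using f1 y b by blast
      have "Option.bind (p s a) (\<lambda>u. p u b) = Option.bind (p a b) (\<lambda>v. p s v)"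
        using ps aS bS sS unfolding partial_semigroup_def by blast
      hence "Option.bind (p a b) (\<lambda>v. p s v) = Some d" using c d by simp
      then obtain v where v: "p a b = Some v" "p s v = Some d" by (auto split: Option.bind_splits)
      show "y \<in> {y\<in>X1. app_defined p s (tensor p lam0 lam1 (SP i j) (x,y))}"
        using y a b v unfolding app_defined_def by simp
    qed
    moreover have "{y\<in>X1. app_defined p c (lam1 j y)} \<in> V" using hV cS by blast
    ultimately show "x \<in> ?T" using uf_mono[OF V] x by auto
  qed
  moreover have "{x\<in>X0. app_defined p s (lam0 i x)} \<in> U" using hU sS by blast
  ultimately have "?T \<in> U" using uf_mono[OF U] by blast
  then show ?thesis using prodU_mem[of X0 X1 "\<lambda>z. app_defined p s (tensor p lam0 lam1 (SP i j) z)" U V]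
    by simp
qed

theorem proposition3p2:
  fixes S :: "'a set" and p :: "'a \<Rightarrow> 'a \<Rightarrow> 'a option"
    and L0 :: "'i set" and lam0 :: "'i \<Rightarrow> 'x \<Rightarrow> 'a option" and X0 :: "'x set"
    and L1 :: "'j set" and lam1 :: "'j \<Rightarrow> 'y \<Rightarrow> 'a option" and X1 :: "'y set"
  assumes "partial_semigroup S p"
    and "finite L0" and "finite L1"
    and "function_array S p L0 lam0 X0"
    and "function_array S p L1 lam1 X1"
  shows "\<exists>f g. fa_hom
           (gammaS S p) (gamma_op S p) (star_set L0 L1)
           (tensor (gamma_op S p) (gamma_lam S lam0 X0) (gamma_lam S lam1 X1))
           (gammaX S p L0 lam0 X0 \<times> gammaX S p L1 lam1 X1)
           (gammaS S p) (gamma_op S p)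
           (gamma_lam S (tensor p lam0 lam1) (X0 \<times> X1))
           (gammaX S p (star_set L0 L1) (tensor p lam0 lam1) (X0 \<times> X1))
           f g"
proof -
  have ps: "partial_semigroup S p" using assms(1) .
  have f0: "\<forall>i\<in>L0. \<forall>x\<in>X0. \<forall>u. lam0 i x = Some u \<longrightarrow> u\<in>S"
    using assms(4) unfolding function_array_def by blast
  have f1: "\<forall>j\<in>L1. \<forall>y\<in>X1. \<forall>u. lam1 j y = Some u \<longrightarrow> u\<in>S"
    using assms(5) unfolding function_array_def by blast
  define f where "f = (\<lambda>(U,V). prodU X0 X1 U V)"
  have h1: "f z \<in> gammaX S p (star_set L0 L1) (tensor p lam0 lam1) (X0 \<times> X1)"
    if zin: "z \<in> gammaX S p L0 lam0 X0 \<times> gammaX S p L1 lam1 X1" for z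
  proof -
    obtain U V where z: "z = (U,V)" and U: "U \<in> gammaX S p L0 lam0 X0" and V: "V \<in> gammaX S p L1 lam1 X1"
      using zin by (cases z) auto
    have Uu: "ultrafilter_on X0 U" and hU: "\<forall>s\<in>S. \<forall>i\<in>L0. {x\<in>X0. app_defined p s (lam0 i x)} \<in> U"
      using U unfolding gammaX_def by auto
    have Vu: "ultrafilter_on X1 V" and hV: "\<forall>s\<in>S. \<forall>j\<in>L1. {y\<in>X1. app_defined p s (lam1 j y)} \<in> V"
      using V unfolding gammaX_def by auto
    have hk: "{z\<in>X0\<times>X1. app_defined p s (tensor p lam0 lam1 k z)} \<in> prodU X0 X1 U V"
      if s: "s \<in> S" and k: "k \<in> star_set L0 L1" for s k
    proof -
      from k consider (L) i where "k = SL i" "i \<in> L0" | (R) j where "k = SR j" "j \<in> L1"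
        | (P) i j where "k = SP i j" "i \<in> L0" "j \<in> L1"
        unfolding star_set_def by auto
      then show ?thesis
      proof cases
        case (L i)
        then show ?thesis
          using prodU_mem[of X0 X1 "\<lambda>z. app_defined p s (tensor p lam0 lam1 k z)" U V] hU s
          by (simp add: uf_const[OF Vu])
      next
        case (R j)
        have "{x\<in>X0. {y\<in>X1. app_defined p s (lam1 j y)} \<in> V} = X0" using hV s R by auto
        then show ?thesis
          using prodU_mem[of X0 X1 "\<lambda>z. app_defined p s (tensor p lam0 lam1 k z)" U V] R uf_top[OF Uu]
          by simp
      next
        case (P i j)
        have a1: "\<forall>x\<in>X0. \<forall>u. lam0 i x = Some u \<longrightarrow> u\<in>S" using f0 P(2) by blast
        have a2: "\<forall>y\<in>X1. \<forall>u. lam1 j y = Some u \<longrightarrow> u\<in>S" using f1 P(3) by blast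
        have a3: "\<forall>s\<in>S. {x\<in>X0. app_defined p s (lam0 i x)} \<in> U" using hU P(2) by blast
        have a4: "\<forall>s\<in>S. {y\<in>X1. app_defined p s (lam1 j y)} \<in> V" using hV P(3) by blast
        show ?thesis using def_SP[where ?lam0.0=lam0 and i=i and ?lam1.0=lam1 and j=j, OF ps Uu Vu a1 a2 a3 a4 s] P(1) by simp
      qed
    qed
    have fz: "f z = prodU X0 X1 U V" unfolding f_def z by simp
    have "ultrafilter_on (X0 \<times> X1) (prodU X0 X1 U V) \<and> (\<forall>s\<in>S. \<forall>i\<in>star_set L0 L1.
        {x \<in> X0 \<times> X1. app_defined p s (tensor p lam0 lam1 i x)} \<in> prodU X0 X1 U V)"
      using prodU_uf[OF Uu Vu] hk by blast
    then show ?thesis unfolding gammaX_def fz by simp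
  qed
  have h2: "gamma_lam S (tensor p lam0 lam1) (X0 \<times> X1) k (f z)
      = map_option id (tensor (gamma_op S p) (gamma_lam S lam0 X0) (gamma_lam S lam1 X1) k z)"
    if k: "k \<in> star_set L0 L1" and zin: "z \<in> gammaX S p L0 lam0 X0 \<times> gammaX S p L1 lam1 X1" for k z
  proof -
    obtain U V where z: "z = (U,V)" and U: "U \<in> gammaX S p L0 lam0 X0" and V: "V \<in> gammaX S p L1 lam1 X1"
      using zin by (cases z) auto
    have Uu: "ultrafilter_on X0 U" using U unfolding gammaX_def by auto
    have Vu: "ultrafilter_on X1 V" using V unfolding gammaX_def by auto
    from k consider (L) i where "k = SL i" "i \<in> L0" | (R) j where "k = SR j" "j \<in> L1"
      | (P) i j where "k = SP i j" "i \<in> L0" "j \<in> L1"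
      unfolding star_set_def by auto
    then show ?thesis
    proof cases
      case (L i)
      then show ?thesis using lam_SL[OF Uu Vu] z unfolding f_def by (simp add: option.map_id)
    next
      case (R j)
      then show ?thesis using lam_SR[OF Uu Vu] z unfolding f_def by (simp add: option.map_id)
    next
      case (P i j)
      have a1: "\<forall>x\<in>X0. \<forall>u. lam0 i x = Some u \<longrightarrow> u\<in>S" using f0 P(2) by blast
      have a2: "\<forall>y\<in>X1. \<forall>u. lam1 j y = Some u \<longrightarrow> u\<in>S" using f1 P(3) by blast
      have e: "gamma_lam S (tensor p lam0 lam1) (X0\<times>X1) (SP i j) (prodU X0 X1 U V)
       = gamma_op S p (the (gamma_lam S lam0 X0 i U)) (the (gamma_lam S lam1 X1 j V))"
        by (rule lam_SP[where ?lam0.0=lam0 and i=i and ?lam1.0=lam1 and j=j, OF Uu Vu a1 a2])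
      have s0: "gamma_lam S lam0 X0 i U = Some (the (gamma_lam S lam0 X0 i U))"
        unfolding gamma_lam_def by simp
      have s1: "gamma_lam S lam1 X1 j V = Some (the (gamma_lam S lam1 X1 j V))"
        unfolding gamma_lam_def by simp
      have "tensor (gamma_op S p) (gamma_lam S lam0 X0) (gamma_lam S lam1 X1) (SP i j) (U,V)
          = gamma_op S p (the (gamma_lam S lam0 X0 i U)) (the (gamma_lam S lam1 X1 j V))"
        by (subst tensor.simps, subst s0, subst s1, simp only: bind.simps)
      moreover have "f z = prodU X0 X1 U V" unfolding f_def z by simp
      ultimately show ?thesis using e P(1) z by (simp only: option.map_id)
    qed
  qed
  have "fa_hom
           (gammaS S p) (gamma_op S p) (star_set L0 L1)
           (tensor (gamma_op S p) (gamma_lam S lam0 X0) (gamma_lam S lam1 X1))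
           (gammaX S p L0 lam0 X0 \<times> gammaX S p L1 lam1 X1)
           (gammaS S p) (gamma_op S p)
           (gamma_lam S (tensor p lam0 lam1) (X0 \<times> X1))
           (gammaX S p (star_set L0 L1) (tensor p lam0 lam1) (X0 \<times> X1))
           f id"
    unfolding fa_hom_def using h1 h2 by (simp add: option.map_id)
  then show ?thesis by blast
qed

end
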